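(* For $\tau,t\in\mathbb{R}$ and integer $n\ge0$ let $$\mu_{2n}(\tau,t)=\int_{-\infty}^{\infty}x^{2n}\exp(-x^6+\tau x^4+tx^2)\,dx.$$ Then $$\frac{\partial^3\mu_{2n}}{\partial t^3}-\tfrac23\tau\frac{\partial^2\mu_{2n}}{\partial t^2}-\tfrac13t\frac{\partial\mu_{2n}}{\partial t}-\tfrac16(2n+1)\mu_{2n}=0.$$ *)

theory Defs
  imports "HOL-Analysis.Analysis"
begin

definition mu :: "nat \<Rightarrow> real \<Rightarrow> real \<Rightarrow> real" where
  "mu n \<tau> t = (LINT x|lborel. x ^ (2 * n) * exp (- (x ^ 6) + \<tau> * x ^ 4 + t * x ^ 2))"

end

theory Submission
  imports Defs "HOL-Probability.Probability" "HOL-Real_Asymp.Real_Asymp"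
begin

lemma poly_bound:
  fixes y \<tau> s :: real assumes y: "y \<ge> 0"
  shows "- (y^3) + \<tau> * y^2 + s * y \<le> 6 * (\<bar>\<tau>\<bar> + \<bar>s\<bar> + 1)^3"
proof -
  define a where "a = \<bar>\<tau>\<bar> + \<bar>s\<bar> + 1"
  have a1: "a \<ge> 1" unfolding a_def by simp
  have "\<tau> * y^2 \<le> a * y^2" unfolding a_def using y by (intro mult_right_mono) auto
  moreover have "s * y \<le> a * y" unfolding a_def using y by (intro mult_right_mono) auto
  moreover have "- (y^3) + a * y^2 + a * y \<le> 6 * a^3"
  proof (cases "y \<le> 2 * a")
    case True
    have "a * y^2 \<le> a * (2*a)^2" using True y a1 by (intro mult_left_mono power_mono) auto
    moreover have "a * y \<le> a * (2*a)" using True a1 by (intro mult_left_mono) auto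
    moreover have "a * (2*a) \<le> 2 * a^3" using a1 by (simp add: power3_eq_cube power2_eq_square)
    moreover have "y^3 \<ge> 0" using y by simp
    ultimately show ?thesis by (simp add: power2_eq_square power3_eq_cube)
  next
    case False
    then have y1: "y \<ge> 1" "y \<ge> 2*a" using a1 by auto
    have "y^3 = y * y^2" by (simp add: power2_eq_square power3_eq_cube)
    also have "\<dots> \<ge> 2*a * y^2" using y1 by (intro mult_right_mono) auto
    finally have "y^3 \<ge> 2*a*y^2" .
    moreover have "a * y \<le> a * y^2" using y1 a1 by (intro mult_left_mono) (auto simp: power2_eq_square)
    moreover have "a^3 \<ge> 0" using a1 by simp
    ultimately show ?thesis by linarith
  qed
  ultimately show ?thesis unfolding a_def[symmetric] by linarith
qed

lemma exp_bound:
  fixes \<tau> s :: real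
  obtains C where "C > 0" "\<And>x::real. exp (- (x^6) + \<tau> * x^4 + s * x^2) \<le> C * exp (- (x^2) / 2)"
proof
  define K where "K = 6 * (\<bar>\<tau>\<bar> + \<bar>s + 1/2\<bar> + 1)^3"
  show "exp K > 0" by simp
  fix x :: real
  have "- ((x^2)^3) + \<tau> * (x^2)^2 + (s+1/2) * x^2 \<le> K"
    unfolding K_def by (rule poly_bound) simp
  then have "- (x^6) + \<tau> * x^4 + s * x^2 \<le> K + (- (x^2) / 2)"
    by (simp add: power_mult[symmetric] algebra_simps)
  then have "exp (- (x^6) + \<tau> * x^4 + s * x^2) \<le> exp (K + (- (x^2) / 2))" by simp
  also have "\<dots> = exp K * exp (- (x^2) / 2)" by (rule exp_add)
  finally show "exp (- (x^6) + \<tau> * x^4 + s * x^2) \<le> exp K * exp (- (x^2) / 2)" .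
qed

lemma integrable_abs_moment:
  fixes \<tau> s :: real
  shows "integrable lborel (\<lambda>x::real. \<bar>x\<bar>^k * exp (- (x^6) + \<tau> * x^4 + s * x^2))"
proof -
  obtain C where C: "C > 0" "\<And>x::real. exp (- (x^6) + \<tau> * x^4 + s * x^2) \<le> C * exp (- (x^2) / 2)"
    using exp_bound[of \<tau> s] by blast
  have i: "integrable lborel (\<lambda>x. (C * sqrt (2*pi)) * (std_normal_density x * \<bar>x\<bar>^k))"
    by (intro integrable_mult_right integrable_std_normal_moment_abs)
  show ?thesis
  proof (rule Bochner_Integration.integrable_bound[OF i])
    show "(\<lambda>x::real. \<bar>x\<bar>^k * exp (- (x^6) + \<tau> * x^4 + s * x^2)) \<in> borel_measurable lborel"
      by measurable
    show "AE x in lborel. norm (\<bar>x\<bar>^k * exp (- (x^6) + \<tau> * x^4 + s * x^2))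
       \<le> norm ((C * sqrt (2*pi)) * (std_normal_density x * \<bar>x\<bar>^k))"
    proof (rule AE_I2)
      fix x :: real
      have sd: "sqrt (2*pi) * std_normal_density x = exp (- (x^2) / 2)"
        by (simp add: std_normal_density_def)
      have "(C * sqrt (2*pi)) * (std_normal_density x * \<bar>x\<bar>^k) = \<bar>x\<bar>^k * C * (sqrt (2*pi) * std_normal_density x)"
        by (simp only: ac_simps)
      also have "\<dots> = \<bar>x\<bar>^k * (C * exp (- (x^2) / 2))" by (simp only: sd mult.assoc)
      finally have eq: "(C * sqrt (2*pi)) * (std_normal_density x * \<bar>x\<bar>^k) = \<bar>x\<bar>^k * (C * exp (- (x^2) / 2))" .
      have le: "\<bar>x\<bar>^k * exp (- (x^6) + \<tau> * x^4 + s * x^2) \<le> \<bar>x\<bar>^k * (C * exp (- (x^2) / 2))"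
        by (intro mult_left_mono C(2)) auto
      have nn: "0 \<le> \<bar>x\<bar>^k * exp (- (x^6) + \<tau> * x^4 + s * x^2)" by simp
      show "norm (\<bar>x\<bar>^k * exp (- (x^6) + \<tau> * x^4 + s * x^2))
       \<le> norm ((C * sqrt (2*pi)) * (std_normal_density x * \<bar>x\<bar>^k))"
        unfolding eq real_norm_def using le nn by linarith
    qed
  qed
qed

lemma integrable_moment:
  fixes \<tau> s :: real
  shows "integrable lborel (\<lambda>x::real. x^k * exp (- (x^6) + \<tau> * x^4 + s * x^2))"
  by (rule Bochner_Integration.integrable_bound[OF integrable_abs_moment[of k \<tau> s]])
     (auto simp: abs_mult power_abs)

lemma exp_diff_le:
  fixes a b :: real
  shows "\<bar>exp a - exp b\<bar> \<le> \<bar>a - b\<bar> * exp (max a b)"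
proof -
  have *: "exp a - exp b \<le> (a - b) * exp a" if "b \<le> a" for a b :: real
  proof -
    have "1 + (b - a) \<le> exp (b - a)" by (rule exp_ge_add_one_self)
    then have "exp a * (1 + (b - a)) \<le> exp a * exp (b - a)" by (intro mult_left_mono) auto
    also have "\<dots> = exp b" by (simp add: exp_diff)
    finally show ?thesis by (simp add: algebra_simps)
  qed
  show ?thesis
  proof (cases "b \<le> a")
    case True
    then show ?thesis using *[OF True] by (simp add: max_def)
  next
    case False
    then show ?thesis using *[of a b] by (simp add: max_def abs_minus_commute)
  qed
qed


lemma deriv_mu: "(mu n \<tau> has_real_derivative mu (Suc n) \<tau> t) (at t)"
proof -
  define E where "E s x = exp (- (x ^ 6) + \<tau> * x ^ 4 + s * x ^ 2)" for s x :: real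
  have muE: "mu m \<tau> s = (LINT x|lborel. x ^ (2 * m) * E s x)" for m s
    by (simp add: mu_def E_def)
  have intE: "integrable lborel (\<lambda>x. x ^ k * E s x)" for k s
    unfolding E_def by (rule integrable_moment)
  have dE: "((\<lambda>s. x ^ (2*n) * E s x) has_real_derivative x ^ (2 * Suc n) * E t x) (at t)" for x
    unfolding E_def by (auto intro!: derivative_eq_intros simp: power_add power2_eq_square)
  let ?D = "\<lambda>s x. (x ^ (2*n) * E s x - x ^ (2*n) * E t x) / (s - t)"
  have "((\<lambda>s. (mu n \<tau> s - mu n \<tau> t) / (s - t)) \<longlongrightarrow> mu (Suc n) \<tau> t) (at t within {t-1<..<t+1})"
  proof (unfold tendsto_at_iff_sequentially, intro allI impI)
    fix X :: "nat \<Rightarrow> real"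
    assume X: "\<forall>i. X i \<in> {t-1<..<t+1} - {t}" and Xt: "X \<longlonglongrightarrow> t"
    have eq: "(mu n \<tau> (X i) - mu n \<tau> t) / (X i - t) = (LINT x|lborel. ?D (X i) x)" for i
      unfolding muE by (simp add: intE Bochner_Integration.integral_diff)
    have "(\<lambda>i. LINT x|lborel. ?D (X i) x) \<longlonglongrightarrow> (LINT x|lborel. x ^ (2 * Suc n) * E t x)"
    proof (rule integral_dominated_convergence[where w = "\<lambda>x. x ^ (2 * Suc n) * E (t+1) x"])
      show "(\<lambda>x. x ^ (2 * Suc n) * E t x) \<in> borel_measurable lborel" unfolding E_def by measurable
      show "?D (X i) \<in> borel_measurable lborel" for i unfolding E_def by measurable
      show "integrable lborel (\<lambda>x. x ^ (2 * Suc n) * E (t+1) x)" by (rule intE)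
      show "AE x in lborel. (\<lambda>i. ?D (X i) x) \<longlonglongrightarrow> x ^ (2 * Suc n) * E t x"
      proof (rule AE_I2)
        fix x
        have "((\<lambda>s. ?D s x) \<longlongrightarrow> x ^ (2 * Suc n) * E t x) (at t)"
          using dE[of x] unfolding has_field_derivative_iff .
        then show "(\<lambda>i. ?D (X i) x) \<longlonglongrightarrow> x ^ (2 * Suc n) * E t x"
          unfolding tendsto_at_iff_sequentially comp_def using X Xt by auto
      qed
      show "AE x in lborel. norm (?D (X i) x) \<le> x ^ (2 * Suc n) * E (t+1) x" for i
      proof (rule AE_I2)
        fix x :: real
        have Xi: "X i \<in> {t-1<..<t+1} - {t}" using X by blast
        have h0: "X i \<noteq> t" and h1: "\<bar>X i - t\<bar> < 1" using Xi by auto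
        let ?a = "- (x ^ 6) + \<tau> * x ^ 4 + X i * x ^ 2" and ?b = "- (x ^ 6) + \<tau> * x ^ 4 + t * x ^ 2"
        have x2: "x^2 \<ge> 0" by simp
        have "\<bar>E (X i) x - E t x\<bar> \<le> \<bar>?a - ?b\<bar> * exp (max ?a ?b)"
          unfolding E_def by (rule exp_diff_le)
        also have "\<bar>?a - ?b\<bar> = \<bar>X i - t\<bar> * x^2"
        proof -
          have "?a - ?b = (X i - t) * x^2" by (simp add: algebra_simps)
          then show ?thesis by (simp add: abs_mult)
        qed
        also have "exp (max ?a ?b) \<le> E (t+1) x"
        proof -
          have "X i * x^2 \<le> (t+1) * x^2" using h1 x2 by (intro mult_right_mono) auto
          moreover have "t * x^2 \<le> (t+1) * x^2" using x2 by (intro mult_right_mono) auto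
          ultimately show ?thesis unfolding E_def by simp
        qed
        finally have "\<bar>E (X i) x - E t x\<bar> \<le> \<bar>X i - t\<bar> * x^2 * E (t+1) x"
          by (simp add: mult_left_mono)
        then have "\<bar>E (X i) x - E t x\<bar> / \<bar>X i - t\<bar> \<le> x^2 * E (t+1) x"
          using h0 by (simp add: divide_le_eq mult_ac)
        then have B: "x ^ (2*n) * (\<bar>E (X i) x - E t x\<bar> / \<bar>X i - t\<bar>) \<le> x ^ (2*n) * (x^2 * E (t+1) x)"
          by (intro mult_left_mono) (auto simp: power_mult)
        have A: "norm (?D (X i) x) = x ^ (2*n) * (\<bar>E (X i) x - E t x\<bar> / \<bar>X i - t\<bar>)"
          by (simp add: abs_mult right_diff_distrib[symmetric] power_mult)
        have C: "x ^ (2 * Suc n) * E (t+1) x = x ^ (2*n) * (x^2 * E (t+1) x)"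
          by (simp add: power_add power2_eq_square)
        show "norm (?D (X i) x) \<le> x ^ (2 * Suc n) * E (t+1) x" unfolding A C by (rule B)
      qed
    qed
    then show "((\<lambda>s. (mu n \<tau> s - mu n \<tau> t) / (s - t)) \<circ> X) \<longlonglongrightarrow> mu (Suc n) \<tau> t"
      unfolding comp_def eq unfolding muE .
  qed
  moreover have atw: "at t within {t-1<..<t+1} = at t" by (rule at_within_open) auto
  ultimately show ?thesis
    unfolding has_field_derivative_iff by simp
qed


lemma ibp:
  fixes n :: nat and \<tau> t :: real
  shows "(2 * real n + 1) * mu n \<tau> t + 2 * t * mu (n+1) \<tau> t + 4 * \<tau> * mu (n+2) \<tau> t - 6 * mu (n+3) \<tau> t = 0"
proof -
  define E where "E x = exp (- (x ^ 6) + \<tau> * x ^ 4 + t * x ^ 2)" for x :: real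
  define F where "F x = x ^ (2*n+1) * E x" for x :: real
  define f where "f x = (2 * real n + 1) * (x ^ (2*n) * E x) + 2 * t * (x ^ (2*(n+1)) * E x)
     + 4 * \<tau> * (x ^ (2*(n+2)) * E x) - 6 * (x ^ (2*(n+3)) * E x)" for x :: real
  have intE: "integrable lborel (\<lambda>x. x ^ k * E x)" for k
    unfolding E_def by (rule integrable_moment)
  have dF: "(F has_real_derivative f x) (at x)" for x
  proof -
    have d1: "((\<lambda>x. x^(2*n+1)) has_real_derivative real (2*n+1) * x^(2*n)) (at x)"
      using DERIV_pow[of "2*n+1" x UNIV] by simp
    have d2: "(E has_real_derivative E x * (- (6 * x^5) + \<tau> * (4 * x^3) + t * (2 * x))) (at x)"
      unfolding E_def by (rule derivative_eq_intros refl | simp)+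
    have d3: "(F has_real_derivative
       (real (2*n+1) * x ^ (2*n) * E x + E x * (- (6 * x^5) + \<tau> * (4 * x^3) + t * (2 * x)) * x ^ (2*n+1))) (at x)"
      unfolding F_def by (rule DERIV_mult[OF d1 d2])
    have "real (2*n+1) * x ^ (2*n) * E x + E x * (- (6 * x^5) + \<tau> * (4 * x^3) + t * (2 * x)) * x ^ (2*n+1) = f x"
    proof -
      define a where "a = x^(2*n)"
      have p: "x^(2*n+1) = a * x" "x^(2*(n+1)) = a * x^2" "x^(2*(n+2)) = a * x^4" "x^(2*(n+3)) = a * x^6"
        unfolding a_def by (simp_all add: power_add eval_nat_numeral)
      show ?thesis unfolding f_def p a_def[symmetric]
        by (simp add: algebra_simps eval_nat_numeral)
    qed
    with d3 show ?thesis by simp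
  qed
  have intf: "integrable lborel f"
    unfolding f_def by (intro Bochner_Integration.integrable_add Bochner_Integration.integrable_diff Bochner_Integration.integrable_mult_right intE)
  have "(LBINT x=-\<infinity>..\<infinity>. f x) = 0 - 0"
  proof (rule interval_integral_FTC_integrable)
    show "(F has_vector_derivative f x) (at x)" for x
      using dF[of x] by (simp add: has_real_derivative_iff_has_vector_derivative)
    show "isCont f x" for x unfolding f_def E_def by (intro continuous_intros)
    show "set_integrable lborel (einterval (-\<infinity>) \<infinity>) f"
      unfolding set_integrable_def using intf by simp
    show "((F \<circ> real_of_ereal) \<longlongrightarrow> 0) (at_right (-\<infinity>))"
      unfolding ereal_tendsto_simps F_def E_def by real_asymp
    show "((F \<circ> real_of_ereal) \<longlongrightarrow> 0) (at_left \<infinity>)"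
      unfolding ereal_tendsto_simps F_def E_def by real_asymp
  qed simp
  then have "(LINT x|lborel. f x) = 0"
    by (simp add: interval_lebesgue_integral_def set_lebesgue_integral_def)
  moreover have "(LINT x|lborel. f x) = (2 * real n + 1) * mu n \<tau> t + 2 * t * mu (n+1) \<tau> t + 4 * \<tau> * mu (n+2) \<tau> t - 6 * mu (n+3) \<tau> t"
    unfolding f_def mu_def E_def[symmetric]
    by (simp only: Bochner_Integration.integral_add Bochner_Integration.integral_diff integral_mult_right_zero intE Bochner_Integration.integrable_add Bochner_Integration.integrable_diff Bochner_Integration.integrable_mult_right)
  ultimately show ?thesis by simp
qed

lemma deriv_iter: "(deriv ^^ k) (mu n \<tau>) = mu (n+k) \<tau>"
proof (induction k)
  case 0 then show ?case by simp
next
  case (Suc k)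
  have "(deriv ^^ Suc k) (mu n \<tau>) = deriv (mu (n+k) \<tau>)" using Suc by simp
  also have "\<dots> = mu (Suc (n+k)) \<tau>" by (intro ext DERIV_imp_deriv deriv_mu)
  finally show ?case by simp
qed

theorem lemma5p5:
  fixes n :: nat and \<tau> t :: real
  shows "(deriv ^^ 3) (mu n \<tau>) t - 2 / 3 * \<tau> * (deriv ^^ 2) (mu n \<tau>) t
          - 1 / 3 * t * deriv (mu n \<tau>) t - 1 / 6 * (2 * real n + 1) * mu n \<tau> t = 0"
proof -
  have d1: "deriv (mu n \<tau>) = mu (n+1) \<tau>" using deriv_iter[of 1 n \<tau>] by simp
  show ?thesis using ibp[of n \<tau> t] unfolding deriv_iter d1 by simp
qed

end
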